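(* Assume (A1)–(A4) and let $b$ be consistent. Then the ADMM sequences $\{x_k\}$ and $\{y_k\}$ are bounded and $$\sum_{k=1}^\infty\big(D_{\mu_k}f(y_{k+1},y_k)+E_k\big)<\infty.$$ In particular $Ax_k\to b$, $Wx_k-y_k\to0$ and $y_{k+1}-y_k\to0$ as $k\to\infty$.
   Context: $\mathcal X,\mathcal Y,\mathcal H$ are real Hilbert spaces. Standing assumptions: (A1) $A:\mathcal X\to\mathcal H$ is bounded linear. (A2) $f:\mathcal Y\to(-\infty,\infty]$ is proper, lower semicontinuous and strongly convex with constant $c_0>0$: $f(ty_1+(1-t)y_2)+c_0t(1-t)\|y_1-y_2\|^2\le tf(y_1)+(1-t)f(y_2)$ for all $y_1,y_2$, $t\in[0,1]$. (A3) $W:\mathscr D(W)\subset\mathcal X\to\mathcal Y$ is a densely defined closed linear operator. (A4) There is $c_1>0$ with $\|Ax\|^2+\|Wx\|^2\ge c_1\|x\|^2$ for all $x\in\mathscr D(W)$. $\mathscr D(f)=\{y:f(y)<\infty\}$; $b\in\mathcal H$ is consistent if $b=Ax$ for some $x\in\mathscr D(W)$ with $Wx\in\mathscr D(f)$. ADMM: fix $\rho_1,\rho_2>0$ and initial $y_0\in\mathcal Y$, $\lambda_0\in\mathcal H$, $\mu_0\in\mathcal Y$. For $k=0,1,\dots$: $x_{k+1}=\arg\min_{x\in\mathscr D(W)}\{\langle\lambda_k,Ax\rangle+\langle\mu_k,Wx\rangle+\frac{\rho_1}{2}\|Ax-b\|^2+\frac{\rho_2}{2}\|Wx-y_k\|^2\}$,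 $y_{k+1}=\arg\min_{y\in\mathcal Y}\{f(y)-\langle\mu_k,y\rangle+\frac{\rho_2}{2}\|Wx_{k+1}-y\|^2\}$, $\lambda_{k+1}=\lambda_k+\rho_1(Ax_{k+1}-b)$, $\mu_{k+1}=\mu_k+\rho_2(Wx_{k+1}-y_{k+1})$. (These minimizers exist and are unique.) Residuals $r_k=Ax_k-b$, $s_k=Wx_k-y_k$ and $E_k=\rho_1\|r_k\|^2+\rho_2\|s_k\|^2+\rho_2\|y_k-y_{k-1}\|^2$ for $k\ge1$. One has $\mu_k\in\partial f(y_k)$ for $k\ge1$. Bregman distance: for $y$ with $\mu\in\partial f(y)$, $D_\mu f(\bar y,y)=f(\bar y)-f(y)-\langle\mu,\bar y-y\rangle$. *)

theory Defs
  imports "HOL-Analysis.Analysis"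
begin

definition proper_fun :: "('y \<Rightarrow> ereal) \<Rightarrow> bool" where
  "proper_fun f \<longleftrightarrow> (\<forall>y. f y \<noteq> -\<infinity>) \<and> (\<exists>y. f y < \<infinity>)"

definition lsc_fun :: "('y::topological_space \<Rightarrow> ereal) \<Rightarrow> bool" where
  "lsc_fun f \<longleftrightarrow> (\<forall>c::real. closed {y. f y \<le> ereal c})"

definition strongly_convex :: "('y::real_normed_vector \<Rightarrow> ereal) \<Rightarrow> real \<Rightarrow> bool" where
  "strongly_convex f c0 \<longleftrightarrow>
     (\<forall>y1 y2. \<forall>t::real. 0 \<le> t \<and> t \<le> 1 \<longrightarrow>
        f (t *\<^sub>R y1 + (1 - t) *\<^sub>R y2) + ereal (c0 * t * (1 - t) * (norm (y1 - y2))\<^sup>2)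
          \<le> ereal t * f y1 + ereal (1 - t) * f y2)"

definition effdom :: "('y \<Rightarrow> ereal) \<Rightarrow> 'y set" where
  "effdom f = {y. f y < \<infinity>}"

definition subdiff :: "('y::real_inner \<Rightarrow> ereal) \<Rightarrow> 'y \<Rightarrow> 'y set" where
  "subdiff f y = {mu. \<forall>z. f y + ereal (inner mu (z - y)) \<le> f z}"

definition bregman :: "('y::real_inner \<Rightarrow> ereal) \<Rightarrow> 'y \<Rightarrow> 'y \<Rightarrow> 'y \<Rightarrow> ereal" where
  "bregman f mu ybar y = f ybar - f y - ereal (inner mu (ybar - y))"

definition dd_closed_linear_op :: "'x::real_normed_vector set \<Rightarrow> ('x \<Rightarrow> 'y::real_normed_vector) \<Rightarrow> bool" where
  "dd_closed_linear_op DW W \<longleftrightarrow>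
     subspace DW \<and>
     (\<forall>x\<in>DW. \<forall>z\<in>DW. W (x + z) = W x + W z) \<and>
     (\<forall>c. \<forall>x\<in>DW. W (c *\<^sub>R x) = c *\<^sub>R W x) \<and>
     closure DW = UNIV \<and>
     closed ((\<lambda>x. (x, W x)) ` DW)"

end

theory Submission imports Defs begin

lemma quad_zero:
  fixes G C :: real
  assumes C: "C \<ge> 0" and h: "\<And>t. 0 \<le> t * G + t^2 * C"
  shows "G = 0"
proof (rule ccontr)
  assume "G \<noteq> 0"
  define t where "t = - G / (C + 1)"
  have "t * G + t^2 * C = - (G * G) / ((C+1) * (C+1))"
  proof -
    have ne: "C + 1 \<noteq> 0" using C by linarith
    have "G + t * C = G / (C+1)" using ne by (simp add: t_def field_simps)
    then have "t * G + t^2 * C = t * (G / (C+1))" by (simp add: power2_eq_square algebra_simps flip: \<open>G + t * C = G / (C+1)\<close>)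
    then show ?thesis using ne by (simp add: t_def)
  qed
  also have "\<dots> < 0"
  proof -
    have "G * G > 0" using \<open>G \<noteq> 0\<close> by (auto simp add: zero_less_mult_iff linorder_neq_iff)
    moreover have "(C+1)*(C+1) > 0" using C by simp
    ultimately show ?thesis by simp
  qed
  finally show False using h[of t] by linarith
qed

lemma norm_add_scale_sq:
  fixes p q :: "'a::real_inner"
  shows "(norm (p + t *\<^sub>R q))\<^sup>2 = (norm p)\<^sup>2 + 2 * t * inner p q + t^2 * (norm q)\<^sup>2"
  unfolding power2_norm_eq_inner by (simp add: inner_simps inner_commute power2_eq_square algebra_simps)


lemma small_eps:
  fixes X Y K :: real
  assumes K: "K \<ge> 0" and h: "\<And>t. 0 < t \<Longrightarrow> t < 1 \<Longrightarrow> X \<le> Y + t * K"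
  shows "X \<le> Y"
proof (rule ccontr)
  assume "\<not> X \<le> Y"
  then have d: "X - Y > 0" by simp
  define t where "t = min (1/2) ((X - Y) / (2*(K+1)))"
  have t0: "t > 0" "t < 1" using d K by (auto simp: t_def)
  have "t * K \<le> ((X - Y) / (2*(K+1))) * K"
    using K by (intro mult_right_mono) (auto simp: t_def)
  also have "\<dots> < X - Y"
  proof -
    have "(X-Y)*K < (X-Y)*(2*(K+1))" using d K by (intro mult_strict_left_mono) auto
    then show ?thesis using K by (simp add: field_simps)
  qed
  finally show False using h[OF t0] by linarith
qed

lemma subgrad_from_min:
  fixes f :: "'y::real_inner \<Rightarrow> ereal"
  assumes sc: "strongly_convex f c0" and c0: "c0 > 0" and rho: "r > 0"
    and ninf: "\<forall>v. f v \<noteq> -\<infinity>"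
    and mn: "\<forall>v. f y - ereal (inner m y) + ereal (r/2 * (norm (w - y))\<^sup>2)
               \<le> f v - ereal (inner m v) + ereal (r/2 * (norm (w - v))\<^sup>2)"
    and fy: "f y = ereal Fy" and fv: "f v = ereal Fv"
  shows "Fy + inner (m + r *\<^sub>R (w - y)) (v - y) + c0 * (norm (v - y))\<^sup>2 \<le> Fv"
proof -
  define N where "N = (norm (v - y))\<^sup>2"
  define P where "P = inner m (v - y) + r * inner (w - y) (v - y)"
  have PP: "inner (m + r *\<^sub>R (w - y)) (v - y) = P" by (simp add: P_def inner_simps algebra_simps)
  have N0: "N \<ge> 0" by (simp add: N_def)
  have "Fy + P + c0 * N \<le> Fv"
  proof (rule small_eps[where K = "c0 * N + r * N / 2"])
    show "0 \<le> c0 * N + r * N / 2" using N0 c0 rho by simp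
    fix t :: real assume t0: "0 < t" and t1: "t < 1"
    define vt where "vt = t *\<^sub>R v + (1 - t) *\<^sub>R y"
    have vt': "vt = y + t *\<^sub>R (v - y)" by (simp add: vt_def algebra_simps)
    have scv: "f vt + ereal (c0 * t * (1 - t) * N) \<le> ereal t * f v + ereal (1 - t) * f y"
      using sc t0 t1 unfolding strongly_convex_def vt_def N_def by auto
    also have "\<dots> = ereal (t * Fv + (1 - t) * Fy)" by (simp add: fv fy)
    finally have scv: "f vt + ereal (c0 * t * (1 - t) * N) \<le> ereal (t * Fv + (1 - t) * Fy)" .
    have "f vt \<noteq> \<infinity>" using scv by auto
    with ninf obtain Ft where ft: "f vt = ereal Ft" by (cases "f vt") auto
    have sc2: "Ft + c0 * t * (1 - t) * N \<le> t * Fv + (1 - t) * Fy" using scv ft by simp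
    have mn2: "Fy - inner m y + r/2 * (norm (w - y))\<^sup>2 \<le> Ft - inner m vt + r/2 * (norm (w - vt))\<^sup>2"
      using mn[rule_format, of vt] fy ft by simp
    have i1: "inner m vt = inner m y + t * inner m (v - y)" by (simp add: vt' inner_simps)
    have "w - vt = (w - y) + (- t) *\<^sub>R (v - y)" by (simp add: vt' algebra_simps)
    then have i2: "(norm (w - vt))\<^sup>2 = (norm (w - y))\<^sup>2 - 2 * t * inner (w - y) (v - y) + t^2 * N"
      unfolding N_def by (simp only: norm_add_scale_sq) simp
    have i2': "r/2 * (norm (w - vt))\<^sup>2 = r/2 * (norm (w - y))\<^sup>2 - r * t * inner (w - y) (v - y) + r/2 * t^2 * N"
      by (simp add: i2 algebra_simps)
    have "Fy \<le> Ft - t * inner m (v - y) - r * t * inner (w - y) (v - y) + r/2 * t^2 * N"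
      using mn2 i1 i2' by linarith
    then have "t * (Fy + P + c0 * N - Fv - t * (c0 * N + r * N / 2)) \<le> 0"
      using sc2 unfolding P_def by (simp add: algebra_simps power2_eq_square)
    then have "Fy + P + c0 * N - Fv - t * (c0 * N + r * N / 2) \<le> 0"
      using t0 by (simp add: mult_le_0_iff)
    then show "Fy + P + c0 * N \<le> Fv + t * (c0 * N + r * N / 2)" by simp
  qed
  then show ?thesis by (simp add: PP N_def)
qed

lemma key_step:
  fixes a a' :: "'h::real_inner" and s s' d d' e :: "'y::real_inner"
  assumes ii: "rho1 * inner a (a - a') + rho2 * inner (s + d - d') (s - s' + d) = 0"
    and iii: "- rho1 * inner a a + rho2 * inner (s + d - d') (e - s) = 0"
    and iv: "rho2 * inner s d \<ge> 2 * c0 * (norm d)\<^sup>2"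
    and DD: "Dn - Do = - Br - rho2 * inner s e"
    and r1: "rho1 > 0" and r2: "rho2 > 0" and c0: "c0 > 0"
    and En: "En = rho1 * (norm a)\<^sup>2 + rho2 * (norm s)\<^sup>2 + rho2 * (norm d)\<^sup>2"
    and Eo: "Eo = rho1 * (norm a')\<^sup>2 + rho2 * (norm s')\<^sup>2 + rho2 * (norm d')\<^sup>2"
    and bc: "beta * c0 = rho2 / 2" and b0: "beta > 0"
  shows "Dn - rho2 * inner d e + beta * En + rho2 * (norm d)\<^sup>2
     \<le> Do - rho2 * inner d' (e + d) + beta * Eo + rho2 * (norm d')\<^sup>2 - En / 2 - Br"
proof -
  have V1: "2 * inner a (a - a') = (norm a)\<^sup>2 - (norm a')\<^sup>2 + (norm (a - a'))\<^sup>2"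
    unfolding power2_norm_eq_inner by (simp add: inner_simps inner_commute algebra_simps)
  have V2: "2 * inner (s + d - d') (s - s' + d) = (norm s)\<^sup>2 - (norm s')\<^sup>2 + (norm d)\<^sup>2 - (norm d')\<^sup>2
      + (norm (s - s' + d - d'))\<^sup>2 + 2 * inner s d"
    unfolding power2_norm_eq_inner by (simp add: inner_simps inner_commute algebra_simps)
  have "rho1 * (2 * inner a (a - a')) + rho2 * (2 * inner (s + d - d') (s - s' + d)) = 0"
    using ii by (simp add: algebra_simps)
  then have Eid: "En - Eo = - rho1 * (norm (a - a'))\<^sup>2 - rho2 * (norm (s - s' + d - d'))\<^sup>2 - 2 * (rho2 * inner s d)"
    unfolding V1 V2 En Eo by (simp add: algebra_simps)
  have "En - Eo \<le> - 2 * (rho2 * inner s d)"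
  proof -
    have "rho1 * (norm (a - a'))\<^sup>2 \<ge> 0" "rho2 * (norm (s - s' + d - d'))\<^sup>2 \<ge> 0" using r1 r2 by simp_all
    then show ?thesis unfolding Eid by linarith
  qed
  also have "\<dots> \<le> - 2 * (2 * c0 * (norm d)\<^sup>2)" using iv by simp
  finally have "beta * (En - Eo) \<le> beta * (- 2 * (2 * c0 * (norm d)\<^sup>2))"
    using b0 by (intro mult_left_mono) auto
  also have "\<dots> = - 4 * (beta * c0) * (norm d)\<^sup>2" by (simp add: algebra_simps)
  finally have F3: "beta * En - beta * Eo \<le> - 2 * (rho2 * (norm d)\<^sup>2)"
    unfolding bc by (simp add: algebra_simps)
  have F1: "rho2 * inner s e + rho2 * inner d e - rho2 * inner d' e
      = rho1 * (norm a)\<^sup>2 + rho2 * (norm s)\<^sup>2 + rho2 * inner s d - rho2 * inner d' s"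
    using iii unfolding power2_norm_eq_inner by (simp add: inner_simps inner_commute algebra_simps)
  have "0 \<le> (norm (d' - (1/2) *\<^sub>R (s + d)))\<^sup>2" by simp
  then have Y: "inner d' s + inner d' d \<le> (norm d')\<^sup>2 + (1/4) * (norm s)\<^sup>2 + (1/2) * inner s d + (1/4) * (norm d)\<^sup>2"
    unfolding power2_norm_eq_inner by (simp add: inner_simps inner_commute algebra_simps)
  have F4: "rho2 * inner d' s + rho2 * inner d' d \<le> rho2 * (norm d')\<^sup>2 + (1/4) * (rho2 * (norm s)\<^sup>2) + (1/2) * (rho2 * inner s d) + (1/4) * (rho2 * (norm d)\<^sup>2)"
    using mult_left_mono[OF Y, of rho2] r2 by (simp add: algebra_simps)
  have F5: "rho2 * inner d' (e + d) = rho2 * inner d' e + rho2 * inner d' d" by (simp add: inner_simps algebra_simps)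
  have F6: "rho2 * inner s d \<ge> 0" proof -
    have "0 \<le> 2 * c0 * (norm d)\<^sup>2" using c0 by simp
    then show ?thesis using iv by linarith
  qed
  have En': "En / 2 = (1/2) * (rho1 * (norm a)\<^sup>2) + (1/2) * (rho2 * (norm s)\<^sup>2) + (1/2) * (rho2 * (norm d)\<^sup>2)"
    using En by simp
  have F7: "rho1 * (norm a)\<^sup>2 \<ge> 0" "rho2 * (norm s)\<^sup>2 \<ge> 0" "rho2 * (norm d)\<^sup>2 \<ge> 0"
    using r1 r2 by simp_all
  show ?thesis using DD F1 F3 F4 F5 F6 F7 En' by linarith
qed


lemma diff_lemma:
  fixes P L1 L0 a :: "'h::real_inner" and Q M1 M0 d d' s :: "'y::real_inner"
  assumes "inner L1 P + inner M1 Q + r2 * inner d Q = 0"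
    and "inner L0 P + inner M0 Q + r2 * inner d' Q = 0"
    and "L1 = L0 + r1 *\<^sub>R a" and "M1 = M0 + r2 *\<^sub>R s"
  shows "r1 * inner a P + r2 * inner (s + d - d') Q = 0"
  using assms by (simp add: inner_simps algebra_simps)

lemma young_ip:
  fixes u v :: "'a::real_inner"
  assumes c: "c > 0"
  shows "r * inner u v \<le> c / 2 * (norm v)\<^sup>2 + r^2 / (2 * c) * (norm u)\<^sup>2"
proof -
  have "0 \<le> (norm (c *\<^sub>R v - r *\<^sub>R u))\<^sup>2" by simp
  then have "2 * c * (r * inner u v) \<le> c^2 * (norm v)\<^sup>2 + r^2 * (norm u)\<^sup>2"
    unfolding power2_norm_eq_inner by (simp add: inner_simps inner_commute algebra_simps power2_eq_square)
  also have "\<dots> = 2 * c * (c / 2 * (norm v)\<^sup>2 + r^2 / (2 * c) * (norm u)\<^sup>2)"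
    using c by (simp add: field_simps power2_eq_square)
  finally show ?thesis using c by simp
qed

lemma sq_le_sqrt:
  fixes v :: "'a::real_normed_vector"
  assumes "rho > 0" "rho * (norm v)\<^sup>2 \<le> M"
  shows "norm v \<le> sqrt (M / rho)"
  using assms by (intro real_le_rsqrt) (simp add: field_simps)
theorem lemma2p5:
  fixes A :: "'x::{real_inner,complete_space} \<Rightarrow> 'h::{real_inner,complete_space}"
    and W :: "'x \<Rightarrow> 'y::{real_inner,complete_space}"
    and DW :: "'x set"
    and f :: "'y \<Rightarrow> ereal"
    and c0 c1 rho1 rho2 :: real
    and b :: 'h
    and x :: "nat \<Rightarrow> 'x" and y :: "nat \<Rightarrow> 'y"
    and lam :: "nat \<Rightarrow> 'h" and mu :: "nat \<Rightarrow> 'y"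
  assumes A1: "bounded_linear A"
    and A2: "proper_fun f" "lsc_fun f" "c0 > 0" "strongly_convex f c0"
    and A3: "dd_closed_linear_op DW W"
    and A4: "c1 > 0" "\<forall>z\<in>DW. (norm (A z))\<^sup>2 + (norm (W z))\<^sup>2 \<ge> c1 * (norm z)\<^sup>2"
    and consistent: "\<exists>z\<in>DW. b = A z \<and> W z \<in> effdom f"
    and rho: "rho1 > 0" "rho2 > 0"
    and x_step: "\<And>k. x (Suc k) \<in> DW \<and>
        (\<forall>z\<in>DW. inner (lam k) (A (x (Suc k))) + inner (mu k) (W (x (Suc k)))
                  + rho1 / 2 * (norm (A (x (Suc k)) - b))\<^sup>2 + rho2 / 2 * (norm (W (x (Suc k)) - y k))\<^sup>2
               \<le> inner (lam k) (A z) + inner (mu k) (W z)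
                  + rho1 / 2 * (norm (A z - b))\<^sup>2 + rho2 / 2 * (norm (W z - y k))\<^sup>2)"
    and y_step: "\<And>k. \<forall>v. f (y (Suc k)) - ereal (inner (mu k) (y (Suc k)))
                         + ereal (rho2 / 2 * (norm (W (x (Suc k)) - y (Suc k)))\<^sup>2)
                       \<le> f v - ereal (inner (mu k) v) + ereal (rho2 / 2 * (norm (W (x (Suc k)) - v))\<^sup>2)"
    and lam_step: "\<And>k. lam (Suc k) = lam k + rho1 *\<^sub>R (A (x (Suc k)) - b)"
    and mu_step: "\<And>k. mu (Suc k) = mu k + rho2 *\<^sub>R (W (x (Suc k)) - y (Suc k))"
  defines "E \<equiv> (\<lambda>k. rho1 * (norm (A (x k) - b))\<^sup>2 + rho2 * (norm (W (x k) - y k))\<^sup>2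
                    + rho2 * (norm (y k - y (k - 1)))\<^sup>2)"
  shows "bounded (x ` {1..}) \<and> bounded (range y)
    \<and> (\<Sum>k. bregman f (mu (Suc k)) (y (Suc (Suc k))) (y (Suc k)) + ereal (E (Suc k))) < \<infinity>
    \<and> (\<lambda>k. A (x k)) \<longlonglongrightarrow> b
    \<and> (\<lambda>k. W (x k) - y k) \<longlonglongrightarrow> 0
    \<and> (\<lambda>k. y (Suc k) - y k) \<longlonglongrightarrow> 0"
proof -
  note c0 = A2(3)
  note r1 = rho(1) and r2 = rho(2)
  obtain xh where xh: "xh \<in> DW" "b = A xh" "W xh \<in> effdom f" using consistent by blast
  define yh where "yh = W xh"
  have sub: "subspace DW" using A3 unfolding dd_closed_linear_op_def by blast
  have Wadd: "\<And>u v. u \<in> DW \<Longrightarrow> v \<in> DW \<Longrightarrow> W (u + v) = W u + W v"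
    using A3 unfolding dd_closed_linear_op_def by blast
  have Wsc: "\<And>c u. u \<in> DW \<Longrightarrow> W (c *\<^sub>R u) = c *\<^sub>R W u"
    using A3 unfolding dd_closed_linear_op_def by blast
  have Wdiff: "\<And>u v. u \<in> DW \<Longrightarrow> v \<in> DW \<Longrightarrow> W (u - v) = W u - W v"
  proof -
    fix u v assume uv: "u \<in> DW" "v \<in> DW"
    have "u - v \<in> DW" using sub uv by (simp add: subspace_diff)
    then have "W (v + (u - v)) = W v + W (u - v)" using Wadd uv by blast
    then show "W (u - v) = W u - W v" by (simp add: algebra_simps)
  qed
  have Adiff: "\<And>u v. A (u - v) = A u - A v" using bounded_linear.linear[OF A1] by (simp add: linear_diff)
  have Aadd: "\<And>u v. A (u + v) = A u + A v" using bounded_linear.linear[OF A1] by (simp add: linear_add)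
  have Asc: "\<And>c u. A (c *\<^sub>R u) = c *\<^sub>R A u" using bounded_linear.linear[OF A1] by (simp add: linear_scale)
  have ninf: "\<forall>v. f v \<noteq> -\<infinity>" using A2(1) unfolding proper_fun_def by blast
  obtain v0 where v0: "f v0 < \<infinity>" using A2(1) unfolding proper_fun_def by blast
  define F where "F = (\<lambda>v. real_of_ereal (f v))"
  have finF: "\<And>v. f v < \<infinity> \<Longrightarrow> f v = ereal (F v)"
  proof -
    fix v assume "f v < \<infinity>"
    then show "f v = ereal (F v)" using ninf unfolding F_def by (cases "f v") auto
  qed
  have fin: "\<And>k. f (y (Suc k)) = ereal (F (y (Suc k)))"
  proof -
    fix k
    have "f (y (Suc k)) - ereal (inner (mu k) (y (Suc k))) + ereal (rho2 / 2 * (norm (W (x (Suc k)) - y (Suc k)))\<^sup>2)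
       \<le> f v0 - ereal (inner (mu k) v0) + ereal (rho2 / 2 * (norm (W (x (Suc k)) - v0))\<^sup>2)"
      using y_step by blast
    moreover have "f v0 - ereal (inner (mu k) v0) + ereal (rho2 / 2 * (norm (W (x (Suc k)) - v0))\<^sup>2) < \<infinity>"
      using v0 ninf by (cases "f v0") auto
    ultimately have "f (y (Suc k)) \<noteq> \<infinity>" by auto
    then show "f (y (Suc k)) = ereal (F (y (Suc k)))" using finF by (simp add: top.not_eq_extremum)
  qed
  have fyh: "f yh < \<infinity>" using xh(3) unfolding effdom_def yh_def by simp
  \<comment> \<open>optimality of the x-step\<close>
  have OPT: "\<And>k z. z \<in> DW \<Longrightarrow> inner (lam (Suc k)) (A z) + inner (mu (Suc k)) (W z)
       + rho2 * inner (y (Suc k) - y k) (W z) = 0"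
  proof -
    fix k z assume z: "z \<in> DW"
    define x1 where "x1 = x (Suc k)"
    have x1: "x1 \<in> DW" using x_step unfolding x1_def by blast
    define G where "G = inner (lam k) (A z) + inner (mu k) (W z) + rho1 * inner (A x1 - b) (A z)
        + rho2 * inner (W x1 - y k) (W z)"
    define C where "C = rho1 / 2 * (norm (A z))\<^sup>2 + rho2 / 2 * (norm (W z))\<^sup>2"
    have "G = 0"
    proof (rule quad_zero[where C = C])
      show "0 \<le> C" using r1 r2 by (simp add: C_def)
      fix t :: real
      have zt: "x1 + t *\<^sub>R z \<in> DW" using sub x1 z by (simp add: subspace_add subspace_scale)
      have mn: "inner (lam k) (A x1) + inner (mu k) (W x1)
                  + rho1 / 2 * (norm (A x1 - b))\<^sup>2 + rho2 / 2 * (norm (W x1 - y k))\<^sup>2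
               \<le> inner (lam k) (A (x1 + t *\<^sub>R z)) + inner (mu k) (W (x1 + t *\<^sub>R z))
                  + rho1 / 2 * (norm (A (x1 + t *\<^sub>R z) - b))\<^sup>2 + rho2 / 2 * (norm (W (x1 + t *\<^sub>R z) - y k))\<^sup>2"
        using x_step[of k] zt unfolding x1_def by blast
      have eA: "A (x1 + t *\<^sub>R z) = A x1 + t *\<^sub>R A z" by (simp add: Aadd Asc)
      have eW: "W (x1 + t *\<^sub>R z) = W x1 + t *\<^sub>R W z"
        using x1 z sub by (simp add: Wadd Wsc subspace_scale)
      have eA2: "A (x1 + t *\<^sub>R z) - b = (A x1 - b) + t *\<^sub>R A z" by (simp add: eA algebra_simps)
      have eW2: "W (x1 + t *\<^sub>R z) - y k = (W x1 - y k) + t *\<^sub>R W z" by (simp add: eW algebra_simps)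
      have n1: "rho1 / 2 * (norm (A (x1 + t *\<^sub>R z) - b))\<^sup>2 = rho1 / 2 * (norm (A x1 - b))\<^sup>2
           + t * (rho1 * inner (A x1 - b) (A z)) + t^2 * (rho1 / 2 * (norm (A z))\<^sup>2)"
        unfolding eA2 norm_add_scale_sq by (simp add: algebra_simps)
      have n2: "rho2 / 2 * (norm (W (x1 + t *\<^sub>R z) - y k))\<^sup>2 = rho2 / 2 * (norm (W x1 - y k))\<^sup>2
           + t * (rho2 * inner (W x1 - y k) (W z)) + t^2 * (rho2 / 2 * (norm (W z))\<^sup>2)"
        unfolding eW2 norm_add_scale_sq by (simp add: algebra_simps)
      have i1: "inner (lam k) (A (x1 + t *\<^sub>R z)) = inner (lam k) (A x1) + t * inner (lam k) (A z)"
        by (simp add: eA inner_simps)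
      have i2: "inner (mu k) (W (x1 + t *\<^sub>R z)) = inner (mu k) (W x1) + t * inner (mu k) (W z)"
        by (simp add: eW inner_simps)
      have "0 \<le> t * inner (lam k) (A z) + t * inner (mu k) (W z) + t * (rho1 * inner (A x1 - b) (A z))
          + t * (rho2 * inner (W x1 - y k) (W z)) + t^2 * (rho1 / 2 * (norm (A z))\<^sup>2) + t^2 * (rho2 / 2 * (norm (W z))\<^sup>2)"
        using mn n1 n2 i1 i2 by linarith
      then show "0 \<le> t * G + t^2 * C" unfolding G_def C_def by (simp add: algebra_simps)
    qed
    have "inner (lam (Suc k)) (A z) + inner (mu (Suc k)) (W z) + rho2 * inner (y (Suc k) - y k) (W z) = G"
      unfolding G_def lam_step mu_step x1_def by (simp add: inner_simps algebra_simps)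
    then show "inner (lam (Suc k)) (A z) + inner (mu (Suc k)) (W z)
       + rho2 * inner (y (Suc k) - y k) (W z) = 0" using \<open>G = 0\<close> by simp
  qed
  have SG: "\<And>k v. f v < \<infinity> \<Longrightarrow> F (y (Suc k)) + inner (mu (Suc k)) (v - y (Suc k))
      + c0 * (norm (v - y (Suc k)))\<^sup>2 \<le> F v"
  proof -
    fix k v assume fv: "f v < \<infinity>"
    have "F (y (Suc k)) + inner (mu k + rho2 *\<^sub>R (W (x (Suc k)) - y (Suc k))) (v - y (Suc k))
      + c0 * (norm (v - y (Suc k)))\<^sup>2 \<le> F v"
      by (rule subgrad_from_min[OF A2(4) c0 r2 ninf y_step fin finF[OF fv]])
    then show "F (y (Suc k)) + inner (mu (Suc k)) (v - y (Suc k))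
      + c0 * (norm (v - y (Suc k)))\<^sup>2 \<le> F v" by (simp add: mu_step)
  qed
  define Br where "Br = (\<lambda>n. F (y (Suc n)) - F (y n) - inner (mu n) (y (Suc n) - y n))"
  define Dh where "Dh = (\<lambda>n. F yh - F (y n) - inner (mu n) (yh - y n))"
  define beta where "beta = rho2 / (2 * c0)"
  define L where "L = (\<lambda>n. Dh n - rho2 * inner (y n - y (n - 1)) (yh - y n) + beta * E n
      + rho2 * (norm (y n - y (n - 1)))\<^sup>2)"
  have beta0: "beta > 0" using c0 r2 by (simp add: beta_def)
  have bc: "beta * c0 = rho2 / 2" using c0 by (simp add: beta_def)
  have E0: "\<And>k. E k \<ge> 0" using r1 r2 by (simp add: E_def)
  have Ea: "\<And>k. rho1 * (norm (A (x k) - b))\<^sup>2 \<le> E k" using r1 r2 by (simp add: E_def)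
  have Es: "\<And>k. rho2 * (norm (W (x k) - y k))\<^sup>2 \<le> E k" using r1 r2 by (simp add: E_def)
  have Ed: "\<And>k. rho2 * (norm (y k - y (k - 1)))\<^sup>2 \<le> E k" using r1 r2 by (simp add: E_def)
  have xin: "\<And>j. x (Suc j) \<in> DW" using x_step by blast
  have Brpos: "\<And>j. c0 * (norm (y (Suc (Suc j)) - y (Suc j)))\<^sup>2 \<le> Br (Suc j)"
  proof -
    fix j
    have "f (y (Suc (Suc j))) < \<infinity>" using fin[of "Suc j"] by simp
    from SG[OF this, of j] show "c0 * (norm (y (Suc (Suc j)) - y (Suc j)))\<^sup>2 \<le> Br (Suc j)"
      unfolding Br_def by simp
  qed
  have Br0: "\<And>j. Br (Suc j) \<ge> 0"
  proof -
    fix j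
    have "0 \<le> c0 * (norm (y (Suc (Suc j)) - y (Suc j)))\<^sup>2" using c0 by simp
    with Brpos[of j] show "Br (Suc j) \<ge> 0" by linarith
  qed
  have Dhpos: "\<And>j. c0 * (norm (yh - y (Suc j)))\<^sup>2 \<le> Dh (Suc j)"
  proof -
    fix j show "c0 * (norm (yh - y (Suc j)))\<^sup>2 \<le> Dh (Suc j)"
      using SG[OF fyh, of j] unfolding Dh_def by linarith
  qed
  have rec: "\<And>j. L (Suc (Suc j)) \<le> L (Suc j) - E (Suc (Suc j)) / 2 - Br (Suc j)"
  proof -
    fix j
    define a where "a = A (x (Suc (Suc j))) - b"
    define a' where "a' = A (x (Suc j)) - b"
    define s where "s = W (x (Suc (Suc j))) - y (Suc (Suc j))"
    define s' where "s' = W (x (Suc j)) - y (Suc j)"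
    define d where "d = y (Suc (Suc j)) - y (Suc j)"
    define d' where "d' = y (Suc j) - y j"
    define e where "e = yh - y (Suc (Suc j))"
    have z1: "x (Suc (Suc j)) - x (Suc j) \<in> DW" using sub xin by (simp add: subspace_diff)
    have z2: "xh - x (Suc (Suc j)) \<in> DW" using sub xin xh(1) by (simp add: subspace_diff)
    have Az1: "A (x (Suc (Suc j)) - x (Suc j)) = a - a'" by (simp add: Adiff a_def a'_def)
    have Wz1: "W (x (Suc (Suc j)) - x (Suc j)) = s - s' + d"
      by (simp add: Wdiff xin s_def s'_def d_def)
    have Az2: "A (xh - x (Suc (Suc j))) = - a" by (simp add: Adiff a_def xh(2))
    have Wz2: "W (xh - x (Suc (Suc j))) = e - s"
      by (simp add: Wdiff xin xh(1) e_def s_def yh_def)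
    have ii: "rho1 * inner a (a - a') + rho2 * inner (s + d - d') (s - s' + d) = 0"
      using diff_lemma[OF OPT[OF z1, of "Suc j"] OPT[OF z1, of j] lam_step[of "Suc j"] mu_step[of "Suc j"]]
      unfolding Az1 Wz1 a_def s_def d_def d'_def by simp
    have iii: "- rho1 * inner a a + rho2 * inner (s + d - d') (e - s) = 0"
      using diff_lemma[OF OPT[OF z2, of "Suc j", folded d_def] OPT[OF z2, of j, folded d'_def]
          lam_step[of "Suc j", folded a_def] mu_step[of "Suc j", folded s_def]]
      unfolding Az2 Wz2 by simp
    have fS: "f (y (Suc j)) < \<infinity>" using fin[of j] by simp
    have sg1: "F (y (Suc (Suc j))) + inner (mu (Suc (Suc j))) (y (Suc j) - y (Suc (Suc j)))
      + c0 * (norm (y (Suc j) - y (Suc (Suc j))))\<^sup>2 \<le> F (y (Suc j))" using SG[OF fS, of "Suc j"] .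
    have sg2: "c0 * (norm d)\<^sup>2 \<le> Br (Suc j)" using Brpos[of j] by (simp add: d_def)
    have m1: "inner (mu (Suc (Suc j))) (y (Suc j) - y (Suc (Suc j))) = - inner (mu (Suc j)) d - rho2 * inner s d"
      unfolding mu_step[of "Suc j"] s_def d_def by (simp add: inner_simps algebra_simps)
    have nd: "norm (y (Suc j) - y (Suc (Suc j))) = norm d" by (simp add: d_def norm_minus_commute)
    have iv: "rho2 * inner s d \<ge> 2 * c0 * (norm d)\<^sup>2"
      using sg1 sg2 m1 nd unfolding Br_def d_def by simp
    have DD: "Dh (Suc (Suc j)) - Dh (Suc j) = - Br (Suc j) - rho2 * inner s e"
      unfolding Dh_def Br_def mu_step[of "Suc j"] s_def e_def by (simp add: inner_simps algebra_simps)
    have En: "E (Suc (Suc j)) = rho1 * (norm a)\<^sup>2 + rho2 * (norm s)\<^sup>2 + rho2 * (norm d)\<^sup>2"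
      by (simp add: E_def a_def s_def d_def)
    have Eo: "E (Suc j) = rho1 * (norm a')\<^sup>2 + rho2 * (norm s')\<^sup>2 + rho2 * (norm d')\<^sup>2"
      by (simp add: E_def a'_def s'_def d'_def)
    have key: "Dh (Suc (Suc j)) - rho2 * inner d e + beta * E (Suc (Suc j)) + rho2 * (norm d)\<^sup>2
       \<le> Dh (Suc j) - rho2 * inner d' (e + d) + beta * E (Suc j) + rho2 * (norm d')\<^sup>2 - E (Suc (Suc j)) / 2 - Br (Suc j)"
      by (rule key_step[OF ii iii iv DD r1 r2 c0 En Eo bc beta0])
    have ed: "e + d = yh - y (Suc j)" by (simp add: e_def d_def)
    show "L (Suc (Suc j)) \<le> L (Suc j) - E (Suc (Suc j)) / 2 - Br (Suc j)"
      using key unfolding ed L_def by (simp add: d_def d'_def e_def)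
  qed
  have Lpos: "\<And>j. c0 / 2 * (norm (yh - y (Suc j)))\<^sup>2 \<le> L (Suc j)"
  proof -
    fix j
    define dd where "dd = y (Suc j) - y j"
    define ee where "ee = yh - y (Suc j)"
    have y1: "rho2 * inner dd ee \<le> c0 / 2 * (norm ee)\<^sup>2 + rho2^2 / (2 * c0) * (norm dd)\<^sup>2"
      by (rule young_ip[OF c0])
    have y2: "rho2^2 / (2 * c0) * (norm dd)\<^sup>2 = beta * (rho2 * (norm dd)\<^sup>2)"
      by (simp add: beta_def power2_eq_square)
    have y3: "beta * (rho2 * (norm dd)\<^sup>2) \<le> beta * E (Suc j)"
      using Ed[of "Suc j"] beta0 by (intro mult_left_mono) (auto simp: dd_def)
    have y4: "rho2 * (norm dd)\<^sup>2 \<ge> 0" using r2 by simp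
    have y5: "c0 * (norm ee)\<^sup>2 \<le> Dh (Suc j)" using Dhpos[of j] by (simp add: ee_def)
    have "L (Suc j) = Dh (Suc j) - rho2 * inner dd ee + beta * E (Suc j) + rho2 * (norm dd)\<^sup>2"
      by (simp add: L_def dd_def ee_def)
    then show "c0 / 2 * (norm (yh - y (Suc j)))\<^sup>2 \<le> L (Suc j)"
      using y1 y2 y3 y4 y5 unfolding ee_def by linarith
  qed
  have tele: "\<And>n. L (Suc n) + E (Suc n) / 2 + (\<Sum>j<n. Br (Suc j) + E (Suc j) / 2) \<le> L 1 + E 1 / 2"
  proof -
    fix n show "L (Suc n) + E (Suc n) / 2 + (\<Sum>j<n. Br (Suc j) + E (Suc j) / 2) \<le> L 1 + E 1 / 2"
    proof (induction n)
      case 0 then show ?case by simp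
    next
      case (Suc n) then show ?case using rec[of n] by simp
    qed
  qed
  define M where "M = 2 * L 1 + E 1"
  have L0: "\<And>j. L (Suc j) \<ge> 0"
  proof -
    fix j
    have "0 \<le> c0 / 2 * (norm (yh - y (Suc j)))\<^sup>2" using c0 by simp
    with Lpos[of j] show "L (Suc j) \<ge> 0" by linarith
  qed
  have S0: "\<And>n. (\<Sum>j<n. Br (Suc j) + E (Suc j) / 2) \<ge> 0"
    using Br0 E0 by (intro sum_nonneg) (simp add: add_nonneg_nonneg)
  have Ebd: "\<And>n. E (Suc n) \<le> M"
  proof -
    fix n show "E (Suc n) \<le> M" using tele[of n] L0[of n] S0[of n] unfolding M_def by linarith
  qed
  have Ybd: "\<And>n. c0 / 2 * (norm (yh - y (Suc n)))\<^sup>2 \<le> M / 2"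
  proof -
    fix n show "c0 / 2 * (norm (yh - y (Suc n)))\<^sup>2 \<le> M / 2"
    proof -
      have "M / 2 = L 1 + E 1 / 2" by (simp add: M_def)
      then show ?thesis using tele[of n] Lpos[of n] S0[of n] E0[of "Suc n"] by linarith
    qed
  qed
  define g where "g = (\<lambda>j. Br (Suc j) + E (Suc j))"
  have g0: "\<And>j. g j \<ge> 0" using Br0 E0 by (simp add: g_def add_nonneg_nonneg)
  have gbd: "\<And>n. (\<Sum>j<n. g j) \<le> M"
  proof -
    fix n
    have "(\<Sum>j<n. g j) \<le> (\<Sum>j<n. 2 * (Br (Suc j) + E (Suc j) / 2))"
      using Br0 unfolding g_def by (intro sum_mono) simp
    also have "\<dots> = 2 * (\<Sum>j<n. Br (Suc j) + E (Suc j) / 2)" by (simp add: sum_distrib_left)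
    also have "\<dots> \<le> M" using tele[of n] L0[of n] E0[of "Suc n"] unfolding M_def by simp
    finally show "(\<Sum>j<n. g j) \<le> M" .
  qed
  have gsum: "summable g" by (rule summableI_nonneg_bounded[OF g0 gbd])
  have term_eq: "(\<lambda>k. bregman f (mu (Suc k)) (y (Suc (Suc k))) (y (Suc k)) + ereal (E (Suc k)))
      = (\<lambda>k. ereal (g k))"
  proof (rule ext)
    fix k
    show "bregman f (mu (Suc k)) (y (Suc (Suc k))) (y (Suc k)) + ereal (E (Suc k)) = ereal (g k)"
      unfolding bregman_def g_def Br_def using fin[of k] fin[of "Suc k"] by simp
  qed
  have sumfin: "(\<Sum>k. bregman f (mu (Suc k)) (y (Suc (Suc k))) (y (Suc k)) + ereal (E (Suc k))) < \<infinity>"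
    unfolding term_eq suminf_ereal'[OF gsum] by simp
  have gt0: "g \<longlonglongrightarrow> 0" by (rule summable_LIMSEQ_zero[OF gsum])
  have ES0: "(\<lambda>k. E (Suc k)) \<longlonglongrightarrow> 0"
  proof (rule tendsto_sandwich[where f = "\<lambda>_. 0" and h = g])
    show "\<forall>\<^sub>F n in sequentially. 0 \<le> E (Suc n)" using E0 by simp
    show "\<forall>\<^sub>F n in sequentially. E (Suc n) \<le> g n" using Br0 by (simp add: g_def)
    show "((\<lambda>_. 0) \<longlongrightarrow> (0::real)) sequentially" by simp
    show "g \<longlonglongrightarrow> 0" by (rule gt0)
  qed
  have Et0: "E \<longlonglongrightarrow> 0" using filterlim_sequentially_Suc[THEN iffD1, OF ES0] .
  have sq1: "(\<lambda>k. sqrt (E k / rho1)) \<longlonglongrightarrow> 0"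
    using tendsto_real_sqrt[OF tendsto_divide_zero[OF Et0, of rho1]] by simp
  have sq2: "(\<lambda>k. sqrt (E k / rho2)) \<longlonglongrightarrow> 0"
    using tendsto_real_sqrt[OF tendsto_divide_zero[OF Et0, of rho2]] by simp
  have sq3: "(\<lambda>k. sqrt (E (Suc k) / rho2)) \<longlonglongrightarrow> 0"
    using tendsto_real_sqrt[OF tendsto_divide_zero[OF ES0, of rho2]] by simp
  have lim1: "(\<lambda>k. A (x k) - b) \<longlonglongrightarrow> 0"
  proof (rule Lim_null_comparison[OF _ sq1])
    show "\<forall>\<^sub>F k in sequentially. norm (A (x k) - b) \<le> sqrt (E k / rho1)"
      by (rule always_eventually) (simp add: sq_le_sqrt[OF r1 Ea])
  qed
  have lim2: "(\<lambda>k. W (x k) - y k) \<longlonglongrightarrow> 0"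
  proof (rule Lim_null_comparison[OF _ sq2])
    show "\<forall>\<^sub>F k in sequentially. norm (W (x k) - y k) \<le> sqrt (E k / rho2)"
      by (rule always_eventually) (simp add: sq_le_sqrt[OF r2 Es])
  qed
  have lim3: "(\<lambda>k. y (Suc k) - y k) \<longlonglongrightarrow> 0"
  proof (rule Lim_null_comparison[OF _ sq3])
    show "\<forall>\<^sub>F k in sequentially. norm (y (Suc k) - y k) \<le> sqrt (E (Suc k) / rho2)"
      by (rule always_eventually) (use sq_le_sqrt[OF r2 Ed[of "Suc _"]] in simp)
  qed
  define Ry where "Ry = sqrt (M / c0)"
  have yb: "\<And>n. norm (yh - y (Suc n)) \<le> Ry"
  proof -
    fix n
    have "c0 * (norm (yh - y (Suc n)))\<^sup>2 \<le> M" using Ybd[of n] by simp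
    then show "norm (yh - y (Suc n)) \<le> Ry" unfolding Ry_def by (rule sq_le_sqrt[OF c0])
  qed
  have bdy: "bounded (range y)"
    unfolding bounded_iff
  proof (intro exI ballI)
    fix v assume "v \<in> range y"
    then obtain n where v: "v = y n" by blast
    show "norm v \<le> max (norm (y 0)) (norm yh + Ry)"
    proof (cases n)
      case 0 then show ?thesis using v by simp
    next
      case (Suc m)
      have "norm (y n) \<le> norm yh + norm (yh - y n)"
        using norm_triangle_ineq4[of yh "yh - y n"] by simp
      then show ?thesis using v yb[of m] Suc by simp
    qed
  qed
  define Rr where "Rr = sqrt (M / rho1)"
  define Rs where "Rs = sqrt (M / rho2)"
  define Kx where "Kx = sqrt ((Rr\<^sup>2 + (Rs + Ry)\<^sup>2) / c1)"
  have xb: "\<And>j. norm (x (Suc j) - xh) \<le> Kx"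
  proof -
    fix j
    define z where "z = x (Suc j) - xh"
    have zD: "z \<in> DW" using sub xin xh(1) by (simp add: subspace_diff z_def)
    have Az: "A z = A (x (Suc j)) - b" by (simp add: z_def Adiff xh(2))
    have Wz: "W z = (W (x (Suc j)) - y (Suc j)) - (yh - y (Suc j))"
      by (simp add: z_def Wdiff xin xh(1) yh_def)
    have nA: "norm (A z) \<le> Rr" unfolding Az Rr_def
      by (rule sq_le_sqrt[OF r1]) (use Ea[of "Suc j"] Ebd[of j] in linarith)
    have nS: "norm (W (x (Suc j)) - y (Suc j)) \<le> Rs" unfolding Rs_def
      by (rule sq_le_sqrt[OF r2]) (use Es[of "Suc j"] Ebd[of j] in linarith)
    have nW: "norm (W z) \<le> Rs + Ry" unfolding Wz
      using norm_triangle_ineq4[of "W (x (Suc j)) - y (Suc j)" "yh - y (Suc j)"] nS yb[of j] by linarith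
    have "(norm (A z))\<^sup>2 \<le> Rr\<^sup>2" using nA by (simp add: power_mono)
    moreover have "(norm (W z))\<^sup>2 \<le> (Rs + Ry)\<^sup>2" using nW by (simp add: power_mono)
    moreover have "c1 * (norm z)\<^sup>2 \<le> (norm (A z))\<^sup>2 + (norm (W z))\<^sup>2" using A4(2) zD by blast
    ultimately have "c1 * (norm z)\<^sup>2 \<le> Rr\<^sup>2 + (Rs + Ry)\<^sup>2" by linarith
    then show "norm (x (Suc j) - xh) \<le> Kx" unfolding Kx_def z_def[symmetric] by (rule sq_le_sqrt[OF A4(1)])
  qed
  have bdx: "bounded (x ` {1..})"
    unfolding bounded_iff
  proof (intro exI ballI)
    fix v assume "v \<in> x ` {1..}"
    then obtain k where v: "v = x k" and k: "k \<ge> 1" by blast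
    then obtain j where kj: "k = Suc j" by (cases k) auto
    have "norm (x k) \<le> norm xh + norm (x k - xh)"
      using norm_triangle_ineq2[of "x k" xh] by simp
    then show "norm v \<le> norm xh + Kx" using xb[of j] v kj by simp
  qed
  show ?thesis using bdx bdy sumfin lim1 lim2 lim3 by (simp add: LIM_zero_iff)
qed
end
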